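(* For every formula with placeholders $\varphi$ and every formula $\psi$: $\varphi[\mathbf{GF}\psi] \equiv (\mathbf{GF}\psi \wedge \varphi[\mathbf{true}]) \vee \varphi[\mathbf{false}]$ and $\varphi[\mathbf{FG}\psi] \equiv (\mathbf{FG}\psi \wedge \varphi[\mathbf{true}]) \vee \varphi[\mathbf{false}]$.
   Context: Fix a finite set $Ap$ of atomic propositions. A word is an infinite sequence $w = w[0]w[1]\dots$ of letters of $2^{Ap}$, and $w_i$ denotes the suffix $w[i]w[i+1]\dots$. Formulas are generated by $\varphi ::= \mathbf{true} \mid \mathbf{false} \mid a \mid \neg a \mid \varphi\wedge\varphi \mid \varphi\vee\varphi \mid \mathbf{X}\varphi \mid \varphi\,\mathbf{U}\,\varphi \mid \varphi\,\mathbf{W}\,\varphi \mid \mathbf{GF}\varphi \mid \mathbf{FG}\varphi$ ($a\in Ap$), where $\mathbf{GF}$, $\mathbf{FG}$ are single unary operators. Semantics: $w\models a$ iff $a\in w[0]$, $w\models\neg a$ iff $a\notin w[0]$, Boolean constants and connectives as usual; $w\models\mathbf{X}\varphi$ iff $w_1\models\varphi$; $w\models\varphi\mathbf{U}\psi$ iff $\exists k$: $w_k\models\psi$ and $\forall j<k$: $w_j\models\varphi$; $w\models\varphi\mathbf{W}\psi$ iff ($\forall k$: $w_k\models\varphi$) or $w\models\varphi\mathbf{U}\psi$; $w\models\mathbf{GF}\varphi$ iff $w_k\models\varphi$ for infinitely many $k$; $w\models\mathbf{FG}\varphi$ iff $\exists n\,\forall k\geq n$: $w_k\models\varphi$. $\varphi\equiv\psi$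 means both formulas are satisfied by exactly the same words. A formula with placeholders is a formula over $Ap\cup\{\star\}$, where $\star$ is a special fresh atomic proposition, with at least one occurrence of $\star$ and no occurrence of $\neg\star$; for such $\varphi$ and a formula $\psi$, $\varphi[\psi]$ denotes the result of substituting $\psi$ for every occurrence of $\star$. *)

theory Defs
  imports Main
begin

datatype 'a ltl =
    LTrue
  | LFalse
  | Prop 'a
  | NProp 'a
  | And "'a ltl" "'a ltl"
  | Or "'a ltl" "'a ltl"
  | Next "'a ltl"
  | Until "'a ltl" "'a ltl"
  | WeakUntil "'a ltl" "'a ltl"
  | GF "'a ltl"
  | FG "'a ltl"

type_synonym 'a word = "nat \<Rightarrow> 'a set"

definition suffix :: "nat \<Rightarrow> 'a word \<Rightarrow> 'a word" where
  "suffix i w = (\<lambda>k. w (k + i))"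

fun models :: "'a word \<Rightarrow> 'a ltl \<Rightarrow> bool" where
  "models w LTrue = True"
| "models w LFalse = False"
| "models w (Prop a) = (a \<in> w 0)"
| "models w (NProp a) = (a \<notin> w 0)"
| "models w (And \<phi> \<psi>) = (models w \<phi> \<and> models w \<psi>)"
| "models w (Or \<phi> \<psi>) = (models w \<phi> \<or> models w \<psi>)"
| "models w (Next \<phi>) = models (suffix 1 w) \<phi>"
| "models w (Until \<phi> \<psi>) =
     (\<exists>k. models (suffix k w) \<psi> \<and> (\<forall>j<k. models (suffix j w) \<phi>))"
| "models w (WeakUntil \<phi> \<psi>) =
     ((\<forall>k. models (suffix k w) \<phi>) \<or>
      (\<exists>k. models (suffix k w) \<psi> \<and> (\<forall>j<k. models (suffix j w) \<phi>)))"
| "models w (GF \<phi>) = infinite {k. models (suffix k w) \<phi>}"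
| "models w (FG \<phi>) = (\<exists>n. \<forall>k\<ge>n. models (suffix k w) \<phi>)"

definition equiv_ltl :: "'a ltl \<Rightarrow> 'a ltl \<Rightarrow> bool" where
  "equiv_ltl \<phi> \<psi> = (\<forall>w. models w \<phi> = models w \<psi>)"

text \<open>Formulas with placeholders: formulas over atoms 'a option, where None is the
  placeholder atom (star).\<close>

fun atoms :: "'a ltl \<Rightarrow> 'a set" where
  "atoms LTrue = {}"
| "atoms LFalse = {}"
| "atoms (Prop a) = {a}"
| "atoms (NProp a) = {}"
| "atoms (And \<phi> \<psi>) = atoms \<phi> \<union> atoms \<psi>"
| "atoms (Or \<phi> \<psi>) = atoms \<phi> \<union> atoms \<psi>"
| "atoms (Next \<phi>) = atoms \<phi>"
| "atoms (Until \<phi> \<psi>) = atoms \<phi> \<union> atoms \<psi>"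
| "atoms (WeakUntil \<phi> \<psi>) = atoms \<phi> \<union> atoms \<psi>"
| "atoms (GF \<phi>) = atoms \<phi>"
| "atoms (FG \<phi>) = atoms \<phi>"

fun natoms :: "'a ltl \<Rightarrow> 'a set" where
  "natoms LTrue = {}"
| "natoms LFalse = {}"
| "natoms (Prop a) = {}"
| "natoms (NProp a) = {a}"
| "natoms (And \<phi> \<psi>) = natoms \<phi> \<union> natoms \<psi>"
| "natoms (Or \<phi> \<psi>) = natoms \<phi> \<union> natoms \<psi>"
| "natoms (Next \<phi>) = natoms \<phi>"
| "natoms (Until \<phi> \<psi>) = natoms \<phi> \<union> natoms \<psi>"
| "natoms (WeakUntil \<phi> \<psi>) = natoms \<phi> \<union> natoms \<psi>"
| "natoms (GF \<phi>) = natoms \<phi>"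
| "natoms (FG \<phi>) = natoms \<phi>"

definition is_placeholder_formula :: "'a option ltl \<Rightarrow> bool" where
  "is_placeholder_formula \<phi> = (None \<in> atoms \<phi> \<and> None \<notin> natoms \<phi>)"

fun subst :: "'a option ltl \<Rightarrow> 'a ltl \<Rightarrow> 'a ltl" where
  "subst LTrue \<psi> = LTrue"
| "subst LFalse \<psi> = LFalse"
| "subst (Prop None) \<psi> = \<psi>"
| "subst (Prop (Some a)) \<psi> = Prop a"
| "subst (NProp None) \<psi> = LTrue" \<comment> \<open>never used: placeholder formulas contain no negated star\<close>
| "subst (NProp (Some a)) \<psi> = NProp a"
| "subst (And \<phi>1 \<phi>2) \<psi> = And (subst \<phi>1 \<psi>) (subst \<phi>2 \<psi>)"
| "subst (Or \<phi>1 \<phi>2) \<psi> = Or (subst \<phi>1 \<psi>) (subst \<phi>2 \<psi>)"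
| "subst (Next \<phi>) \<psi> = Next (subst \<phi> \<psi>)"
| "subst (Until \<phi>1 \<phi>2) \<psi> = Until (subst \<phi>1 \<psi>) (subst \<phi>2 \<psi>)"
| "subst (WeakUntil \<phi>1 \<phi>2) \<psi> = WeakUntil (subst \<phi>1 \<psi>) (subst \<phi>2 \<psi>)"
| "subst (GF \<phi>) \<psi> = GF (subst \<phi> \<psi>)"
| "subst (FG \<phi>) \<psi> = FG (subst \<phi> \<psi>)"

end

theory Submission
  imports Defs
begin

lemma suffix_suffix[simp]: "suffix k (suffix m w) = suffix (k + m) w"
  by (simp add: suffix_def add.assoc)

lemma suffix_0[simp]: "suffix 0 w = w"
  by (simp add: suffix_def)

lemma subst_cong:
  assumes "\<forall>k. models (suffix k w) \<chi> = models (suffix k w) c"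
  shows "models w (subst \<phi> \<chi>) = models w (subst \<phi> c)"
  using assms
proof (induction \<phi> arbitrary: w)
  case (Prop x) then show ?case by (cases x) (auto dest: spec[of _ 0])
next
  case (NProp x) then show ?case by (cases x) auto
next
  case (Next \<phi>) then show ?case by (simp add: add.assoc[symmetric])
next
  case (Until \<phi>1 \<phi>2)
  have "\<And>j. models (suffix j w) (subst \<phi>1 \<chi>) = models (suffix j w) (subst \<phi>1 c)"
       "\<And>j. models (suffix j w) (subst \<phi>2 \<chi>) = models (suffix j w) (subst \<phi>2 c)"
    using Until by (simp_all add: add.assoc[symmetric])
  then show ?case by simp
next
  case (WeakUntil \<phi>1 \<phi>2)
  have "\<And>j. models (suffix j w) (subst \<phi>1 \<chi>) = models (suffix j w) (subst \<phi>1 c)"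
       "\<And>j. models (suffix j w) (subst \<phi>2 \<chi>) = models (suffix j w) (subst \<phi>2 c)"
    using WeakUntil by (simp_all add: add.assoc[symmetric])
  then show ?case by simp
next
  case (GF \<phi>)
  have "\<And>j. models (suffix j w) (subst \<phi> \<chi>) = models (suffix j w) (subst \<phi> c)"
    using GF by (simp_all add: add.assoc[symmetric])
  then show ?case by simp
next
  case (FG \<phi>)
  have "\<And>j. models (suffix j w) (subst \<phi> \<chi>) = models (suffix j w) (subst \<phi> c)"
    using FG by (simp_all add: add.assoc[symmetric])
  then show ?case by simp
qed auto

lemma subst_mono:
  assumes "\<forall>v. models v \<chi>1 \<longrightarrow> models v \<chi>2"
  shows "models w (subst \<phi> \<chi>1) \<Longrightarrow> models w (subst \<phi> \<chi>2)"
proof (induction \<phi> arbitrary: w)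
  case (Prop x) then show ?case using assms by (cases x) auto
next
  case (NProp x) then show ?case by (cases x) auto
next
  case (Until \<phi>1 \<phi>2) then show ?case by simp blast
next
  case (WeakUntil \<phi>1 \<phi>2) then show ?case by simp blast
next
  case (GF \<phi>) then show ?case
    by simp (metis (mono_tags, lifting) infinite_super mem_Collect_eq subsetI)
next
  case (FG \<phi>) then show ?case by simp blast
qed auto

lemma GF_inv: "models (suffix m w) (GF \<psi>) = models w (GF \<psi>)"
proof -
  let ?S = "{k. models (suffix k w) \<psi>}"
  have "{k. models (suffix k (suffix m w)) \<psi>} = (\<lambda>k. k - m) ` (?S \<inter> {m..})"
    by (auto simp: image_iff intro!: bexI[where x="_ + m"])
  moreover have "inj_on (\<lambda>k. k - m) (?S \<inter> {m..})" by (auto simp: inj_on_def)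
  ultimately have "finite {k. models (suffix k (suffix m w)) \<psi>} = finite (?S \<inter> {m..})"
    using finite_image_iff by metis
  moreover have "finite (?S \<inter> {m..}) = finite ?S"
  proof
    assume "finite (?S \<inter> {m..})"
    moreover have "?S \<subseteq> (?S \<inter> {m..}) \<union> {..<m}" by auto
    ultimately show "finite ?S" by (meson finite_Un finite_lessThan finite_subset)
  qed auto
  ultimately show ?thesis by simp
qed

lemma FG_inv: "models (suffix m w) (FG \<psi>) = models w (FG \<psi>)"
proof
  assume "models (suffix m w) (FG \<psi>)"
  then obtain n where "\<forall>k\<ge>n. models (suffix (k + m) w) \<psi>" by auto
  then have "\<forall>k\<ge>n + m. models (suffix k w) \<psi>"
  proof (intro allI impI)
    fix k assume "n + m \<le> k"
    then have "k - m \<ge> n" and "k = (k - m) + m" by auto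
    then show "models (suffix k w) \<psi>" using \<open>\<forall>k\<ge>n. models (suffix (k + m) w) \<psi>\<close> by metis
  qed
  then show "models w (FG \<psi>)" by auto
next
  assume "models w (FG \<psi>)"
  then obtain n where "\<forall>k\<ge>n. models (suffix k w) \<psi>" by auto
  then have "\<forall>k\<ge>n. models (suffix (k + m) w) \<psi>" by auto
  then show "models (suffix m w) (FG \<psi>)" by auto
qed

lemma main:
  assumes inv: "\<And>m w. models (suffix m w) \<chi> = models w \<chi>"
  shows "equiv_ltl (subst \<phi> \<chi>) (Or (And \<chi> (subst \<phi> LTrue)) (subst \<phi> LFalse))"
  unfolding equiv_ltl_def
proof
  fix w
  have mF: "models w (subst \<phi> LFalse) \<Longrightarrow> models w (subst \<phi> LTrue)"
    by (rule subst_mono) auto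
  show "models w (subst \<phi> \<chi>) = models w (Or (And \<chi> (subst \<phi> LTrue)) (subst \<phi> LFalse))"
  proof (cases "models w \<chi>")
    case True
    then have "models w (subst \<phi> \<chi>) = models w (subst \<phi> LTrue)"
      by (intro subst_cong) (simp add: inv)
    then show ?thesis using True mF by auto
  next
    case False
    then have "models w (subst \<phi> \<chi>) = models w (subst \<phi> LFalse)"
      by (intro subst_cong) (simp add: inv)
    then show ?thesis using False by auto
  qed
qed

theorem lemma2:
  fixes \<phi> :: "'a option ltl" and \<psi> :: "'a ltl"
  assumes "is_placeholder_formula \<phi>"
  shows "equiv_ltl (subst \<phi> (GF \<psi>)) (Or (And (GF \<psi>) (subst \<phi> LTrue)) (subst \<phi> LFalse))
       \<and> equiv_ltl (subst \<phi> (FG \<psi>)) (Or (And (FG \<psi>) (subst \<phi> LTrue)) (subst \<phi> LFalse))"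
  using main[of "GF \<psi>", OF GF_inv] main[of "FG \<psi>", OF FG_inv] by blast

end
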